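(* Let $I\subseteq K[x,y,z]$ be a monomial ideal and let $T=T_d(I)$ be a balanced triangular region. Then $T$ admits a lozenge tiling if and only if $T$ has no $\bigtriangledown$-heavy monomial subregion.
   Context: For $d\ge1$, $\mathcal T_d$ is an equilateral triangle of side length $d$ (horizontal bottom side) subdivided into $\binom{d+1}{2}$ upward-pointing and $\binom d2$ downward-pointing unit triangles. Upward ones are labeled by the degree $d-1$ monomials of $K[x,y,z]$, downward ones by degree $d-2$ monomials: $x^{d-1}$ at the top, $y^{d-1}$ bottom-left, $z^{d-1}$ bottom-right, and an upward triangle sharing an edge with a downward one has label equal to the downward label times a variable. A subregion is a set of unit triangles. $T_d(I)$ is the subregion of unit triangles whose labels are not in $I$. A subregion is balanced if it has equally many upward- and downward-pointing triangles and $\bigtriangledown$-heavy if it has more downward- than upward-pointing triangles. For a subregion $T$ and a monomial $m$ of degree $<d$, the monomial subregion of $T$ associated to $m$ is the set of unit triangles of $T$ whose labels are divisible by $m$ (these lie in the upward triangle of side length $d-\deg m$ associated to $m$). A lozenge is a union of two unit triangles sharing an edge; a lozenge tiling covers every unit triangle of the region exactly once (the empty region counts as tileable). *)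

theory Defs
  imports Main
begin

text \<open>Monomials x^a y^b z^c of K[x,y,z] are represented by exponent triples (a,b,c).
  A monomial ideal is determined by the set of monomials it contains, which is a set
  of exponent triples closed under multiplication by monomials.\<close>

type_synonym monom = "nat \<times> nat \<times> nat"

fun mdeg :: "monom \<Rightarrow> nat" where
  "mdeg (a, b, c) = a + b + c"

fun mdvd :: "monom \<Rightarrow> monom \<Rightarrow> bool" where
  "mdvd (a, b, c) (a', b', c') \<longleftrightarrow> a \<le> a' \<and> b \<le> b' \<and> c \<le> c'"

definition monomial_ideal :: "monom set \<Rightarrow> bool" where
  "monomial_ideal I \<longleftrightarrow> (\<forall>m m'. m \<in> I \<longrightarrow> mdvd m m' \<longrightarrow> m' \<in> I)"

text \<open>Unit triangles of T_d: upward ones labelled by degree d-1 monomials,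
  downward ones by degree d-2 monomials.\<close>

datatype tri = Up monom | Down monom

definition tri_label :: "tri \<Rightarrow> monom" where
  "tri_label t = (case t of Up m \<Rightarrow> m | Down m \<Rightarrow> m)"

definition triangle :: "nat \<Rightarrow> tri set" where
  "triangle d = {Up m | m. mdeg m + 1 = d} \<union> {Down m | m. mdeg m + 2 = d}"

definition Td :: "nat \<Rightarrow> monom set \<Rightarrow> tri set" where
  "Td d I = {t \<in> triangle d. tri_label t \<notin> I}"

definition ups :: "tri set \<Rightarrow> tri set" where
  "ups T = {t \<in> T. \<exists>m. t = Up m}"

definition downs :: "tri set \<Rightarrow> tri set" where
  "downs T = {t \<in> T. \<exists>m. t = Down m}"

definition balanced :: "tri set \<Rightarrow> bool" where
  "balanced T \<longleftrightarrow> card (ups T) = card (downs T)"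

definition down_heavy :: "tri set \<Rightarrow> bool" where
  "down_heavy T \<longleftrightarrow> card (downs T) > card (ups T)"

definition monomial_subregion :: "tri set \<Rightarrow> monom \<Rightarrow> tri set" where
  "monomial_subregion T m = {t \<in> T. mdvd m (tri_label t)}"

text \<open>Two unit triangles share an edge iff the upward label is the downward label
  times a variable.\<close>

definition unit_vec :: "nat \<Rightarrow> monom" where
  "unit_vec i = (if i = 0 then (1,0,0) else if i = 1 then (0,1,0) else (0,0,1))"

fun madd :: "monom \<Rightarrow> monom \<Rightarrow> monom" where
  "madd (a, b, c) (a', b', c') = (a + a', b + b', c + c')"

definition adjacent :: "monom \<Rightarrow> monom \<Rightarrow> bool" where
  "adjacent u w \<longleftrightarrow> (\<exists>i<3. u = madd w (unit_vec i))"

definition is_lozenge :: "tri set \<Rightarrow> bool" where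
  "is_lozenge L \<longleftrightarrow> (\<exists>u w. L = {Up u, Down w} \<and> adjacent u w)"

definition lozenge_tiling :: "tri set set \<Rightarrow> tri set \<Rightarrow> bool" where
  "lozenge_tiling P T \<longleftrightarrow>
     (\<forall>L\<in>P. is_lozenge L \<and> L \<subseteq> T) \<and>
     (\<forall>L\<in>P. \<forall>L'\<in>P. L \<noteq> L' \<longrightarrow> L \<inter> L' = {}) \<and>
     \<Union>P = T"

definition tileable :: "tri set \<Rightarrow> bool" where
  "tileable T \<longleftrightarrow> (\<exists>P. lozenge_tiling P T)"

end

theory Submission
  imports Defs
begin


definition cx :: "monom \<Rightarrow> nat" where "cx m = fst m"
definition cy :: "monom \<Rightarrow> nat" where "cy m = fst (snd m)"
definition cz :: "monom \<Rightarrow> nat" where "cz m = snd (snd m)"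

lemma cxyz_simps[simp]: "cx (a,b,c) = a" "cy (a,b,c) = b" "cz (a,b,c) = c"
  by (auto simp: cx_def cy_def cz_def)

lemma monom_eq_iff: "m = m' \<longleftrightarrow> cx m = cx m' \<and> cy m = cy m' \<and> cz m = cz m'"
  by (cases m, cases m') auto

lemma mdeg_c: "mdeg m = cx m + cy m + cz m"
  by (cases m) auto

lemma mdvd_c: "mdvd m w \<longleftrightarrow> cx m \<le> cx w \<and> cy m \<le> cy w \<and> cz m \<le> cz w"
  by (cases m, cases w) auto

definition ex :: "monom \<Rightarrow> monom" where "ex w = (Suc (cx w), cy w, cz w)"
definition ey :: "monom \<Rightarrow> monom" where "ey w = (cx w, Suc (cy w), cz w)"
definition ez :: "monom \<Rightarrow> monom" where "ez w = (cx w, cy w, Suc (cz w))"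

lemma exyz_c[simp]:
  "cx (ex w) = Suc (cx w)" "cy (ex w) = cy w" "cz (ex w) = cz w"
  "cx (ey w) = cx w" "cy (ey w) = Suc (cy w)" "cz (ey w) = cz w"
  "cx (ez w) = cx w" "cy (ez w) = cy w" "cz (ez w) = Suc (cz w)"
  by (auto simp: ex_def ey_def ez_def)

lemma ex_less3: "(\<exists>i<(3::nat). P i) \<longleftrightarrow> P 0 \<or> P (Suc 0) \<or> P (Suc (Suc 0))"
  by (auto simp: numeral_3_eq_3 less_Suc_eq)

lemma adjacent_iff: "adjacent u w \<longleftrightarrow> u = ex w \<or> u = ey w \<or> u = ez w"
proof -
  obtain a b c where w: "w = (a,b,c)" by (cases w)
  show ?thesis unfolding adjacent_def ex_less3
    by (simp add: w unit_vec_def ex_def ey_def ez_def)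
qed

lemma adj_c: "adjacent u w \<Longrightarrow> mdeg u = Suc (mdeg w) \<and> mdvd w u"
  by (auto simp: adjacent_iff mdeg_c mdvd_c monom_eq_iff)

definition Qs :: "nat \<Rightarrow> monom set \<Rightarrow> monom set" where
  "Qs d I = {w. mdeg w + 2 = d \<and> w \<notin> I}"
definition Ps :: "nat \<Rightarrow> monom set \<Rightarrow> monom set" where
  "Ps d I = {u. mdeg u + 1 = d \<and> u \<notin> I}"

lemma finite_deg: "finite {m. mdeg m + k = d}"
proof -
  have "{m. mdeg m + k = d} \<subseteq> {..d} \<times> {..d} \<times> {..d}" by (auto simp: mdeg_c cx_def cy_def cz_def)
  then show ?thesis by (rule finite_subset) auto
qed

lemma finite_Qs: "finite (Qs d I)" unfolding Qs_def by (rule finite_subset[OF _ finite_deg[of 2 d]]) auto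
lemma finite_Ps: "finite (Ps d I)" unfolding Ps_def by (rule finite_subset[OF _ finite_deg[of 1 d]]) auto

lemma downs_Td: "downs (Td d I) = Down ` Qs d I"
  by (auto simp: downs_def Td_def triangle_def Qs_def tri_label_def)
lemma ups_Td: "ups (Td d I) = Up ` Ps d I"
  by (auto simp: ups_def Td_def triangle_def Ps_def tri_label_def)
lemma downs_sub: "downs (monomial_subregion (Td d I) m) = Down ` {w \<in> Qs d I. mdvd m w}"
  by (auto simp: downs_def Td_def triangle_def Qs_def tri_label_def monomial_subregion_def)
lemma ups_sub: "ups (monomial_subregion (Td d I) m) = Up ` {u \<in> Ps d I. mdvd m u}"
  by (auto simp: ups_def Td_def triangle_def Ps_def tri_label_def monomial_subregion_def)

lemma card_Down: "card (Down ` X) = card X" by (simp add: card_image inj_on_def)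
lemma card_Up: "card (Up ` X) = card X" by (simp add: card_image inj_on_def)

lemma mdvd_trans: "mdvd a b \<Longrightarrow> mdvd b c \<Longrightarrow> mdvd a c"
  by (auto simp: mdvd_c)



definition board :: "nat \<Rightarrow> (nat \<times> nat) set" where
  "board n = {p. fst p + snd p < n}"

definition yadj :: "nat \<times> nat \<Rightarrow> nat \<times> nat \<Rightarrow> bool" where
  "yadj p q \<longleftrightarrow>
     (fst q = Suc (fst p) \<and> snd q = snd p) \<or> (fst p = Suc (fst q) \<and> snd p = snd q) \<or>
     (fst q = fst p \<and> snd q = Suc (snd p)) \<or> (fst q = fst p \<and> snd p = Suc (snd q)) \<or>
     (fst q = Suc (fst p) \<and> snd p = Suc (snd q)) \<or> (fst p = Suc (fst q) \<and> snd q = Suc (snd p))"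

definition yrel :: "(nat \<times> nat) set \<Rightarrow> nat \<times> nat \<Rightarrow> nat \<times> nat \<Rightarrow> bool" where
  "yrel X p q \<longleftrightarrow> p \<in> X \<and> q \<in> X \<and> yadj p q"

definition yconn :: "(nat \<times> nat) set \<Rightarrow> bool" where
  "yconn X \<longleftrightarrow> (\<forall>a\<in>X. \<forall>b\<in>X. (yrel X)\<^sup>*\<^sup>* a b)"

definition ywin :: "nat \<Rightarrow> (nat \<times> nat) set \<Rightarrow> bool" where
  "ywin n X \<longleftrightarrow> X \<subseteq> board n \<and> yconn X \<and> (\<exists>a\<in>X. fst a = 0) \<and> (\<exists>a\<in>X. snd a = 0)
     \<and> (\<exists>a\<in>X. fst a + snd a + 1 = n)"

definition tri :: "nat \<times> nat \<Rightarrow> (nat \<times> nat) set" where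
  "tri t = {t, (Suc (fst t), snd t), (fst t, Suc (snd t))}"

definition red :: "nat \<Rightarrow> (nat \<times> nat) set \<Rightarrow> (nat \<times> nat) set" where
  "red n X = {t \<in> board n. \<exists>a b. a \<noteq> b \<and> a \<in> X \<and> b \<in> X \<and> a \<in> tri t \<and> b \<in> tri t}"

lemma yadj_sym: "yadj p q \<Longrightarrow> yadj q p"
  unfolding yadj_def by auto

lemma yadj_neq: "yadj p q \<Longrightarrow> p \<noteq> q"
  unfolding yadj_def by auto

lemma yadj_tri:
  assumes "yadj a b" "a \<in> board (Suc n)" "b \<in> board (Suc n)"
  shows "\<exists>t\<in>board n. a \<in> tri t \<and> b \<in> tri t"
proof -
  obtain i j k l where ab: "a = (i,j)" "b = (k,l)" by (cases a, cases b)
  show ?thesis using assms unfolding ab yadj_def board_def tri_def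
    apply (elim disjE conjE)
    apply simp_all
    apply (rule exI[of _ i], rule exI[of _ j], simp)
    apply (rule exI[of _ k], rule exI[of _ l], simp)
    apply (rule exI[of _ i], rule exI[of _ j], simp)
    apply (rule exI[of _ i], rule exI[of _ l], simp)
    apply (rule exI[of _ i], rule exI[of _ l], simp)
    apply (rule exI[of _ k], rule exI[of _ j], simp)
    done
qed

lemma tri_common:
  assumes "a \<in> tri t" "a \<in> tri t'"
  shows "t = t' \<or> yadj t t'"
  using assms unfolding tri_def yadj_def
  by (cases t, cases t', auto)

lemma tri_bounds:
  assumes "a \<in> tri t"
  shows "fst t \<le> fst a" "snd t \<le> snd a" "fst a + snd a \<le> Suc (fst t + snd t)"
  using assms unfolding tri_def by auto

lemma red_disj:
  assumes "X \<inter> Z = {}"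
  shows "red n X \<inter> red n Z = {}"
  using assms unfolding red_def tri_def by auto

lemma yrel_mono_first:
  assumes "(yrel X)\<^sup>*\<^sup>* a b" "a \<noteq> b"
  shows "\<exists>c\<in>X. yadj a c \<and> a \<in> X"
  using assms by (induction rule: converse_rtranclp_induct) (auto simp: yrel_def)

lemma red_win:
  assumes w: "ywin (Suc n) X" and n: "n \<ge> 1"
  shows "ywin n (red n X)"
proof -
  have Xb: "X \<subseteq> board (Suc n)" and conn: "yconn X" using w by (auto simp: ywin_def)
  obtain a0 where a0: "a0 \<in> X" "fst a0 = 0" using w by (auto simp: ywin_def)
  obtain c0 where c0: "c0 \<in> X" "fst c0 + snd c0 + 1 = Suc n" using w by (auto simp: ywin_def)
  obtain b0 where b0: "b0 \<in> X" "snd b0 = 0" using w by (auto simp: ywin_def)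
  have other: "\<exists>b\<in>X. b \<noteq> a" for a
  proof (cases "a = c0")
    case False then show ?thesis using c0 by auto
  next
    case True
    have "a0 \<noteq> c0 \<or> b0 \<noteq> c0" using a0 b0 c0 n by auto
    then show ?thesis using True a0 b0 by auto
  qed
  have hasnb: "\<exists>b\<in>X. yadj a b" if a: "a \<in> X" for a
  proof -
    obtain b where b: "b \<in> X" "b \<noteq> a" using other by blast
    have "(yrel X)\<^sup>*\<^sup>* a b" using conn a b unfolding yconn_def by auto
    then show ?thesis using yrel_mono_first b by metis
  qed
  have intri: "\<exists>t\<in>red n X. a \<in> tri t" if a: "a \<in> X" for a
  proof -
    obtain b where b: "b \<in> X" "yadj a b" using hasnb[OF a] by blast
    obtain t where t: "t \<in> board n" "a \<in> tri t" "b \<in> tri t"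
      using yadj_tri[OF b(2), of n] Xb a b by blast
    have "t \<in> red n X" unfolding red_def using t a b yadj_neq[OF b(2)] by blast
    then show ?thesis using t by auto
  qed
  have rb: "red n X \<subseteq> board n" unfolding red_def by auto
  have rconn: "yconn (red n X)"
    unfolding yconn_def
  proof (intro ballI)
    fix t1 t2 assume t1: "t1 \<in> red n X" and t2: "t2 \<in> red n X"
    obtain a1 where a1: "a1 \<in> X" "a1 \<in> tri t1" using t1 unfolding red_def by auto
    obtain a2 where a2: "a2 \<in> X" "a2 \<in> tri t2" using t2 unfolding red_def by auto
    have path: "(yrel X)\<^sup>*\<^sup>* a1 a2" using conn a1 a2 unfolding yconn_def by auto
    have "\<forall>t\<in>red n X. a \<in> tri t \<longrightarrow> (yrel (red n X))\<^sup>*\<^sup>* t1 t"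
      if "(yrel X)\<^sup>*\<^sup>* a1 a" for a
      using that
    proof (induction rule: rtranclp_induct)
      case base
      show ?case
      proof (intro ballI impI)
        fix t assume t: "t \<in> red n X" "a1 \<in> tri t"
        from tri_common[OF a1(2) t(2)] show "(yrel (red n X))\<^sup>*\<^sup>* t1 t"
          using t1 t by (auto simp: yrel_def)
      qed
    next
      case (step a a')
      have aa: "a \<in> X" "a' \<in> X" "yadj a a'" using step(2) by (auto simp: yrel_def)
      obtain t0 where t0: "t0 \<in> board n" "a \<in> tri t0" "a' \<in> tri t0"
        using yadj_tri[OF aa(3), of n] Xb aa by blast
      have t0r: "t0 \<in> red n X" unfolding red_def using t0 aa yadj_neq[OF aa(3)] by blast
      have p0: "(yrel (red n X))\<^sup>*\<^sup>* t1 t0" using step(3) t0r t0 by auto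
      show ?case
      proof (intro ballI impI)
        fix t assume t: "t \<in> red n X" "a' \<in> tri t"
        from tri_common[OF t0(3) t(2)] show "(yrel (red n X))\<^sup>*\<^sup>* t1 t"
        proof
          assume "t0 = t" then show ?thesis using p0 by simp
        next
          assume "yadj t0 t"
          then have "yrel (red n X) t0 t" using t0r t by (auto simp: yrel_def)
          then show ?thesis using p0 by auto
        qed
      qed
    qed
    then show "(yrel (red n X))\<^sup>*\<^sup>* t1 t2" using path a2 t2 by auto
  qed
  obtain ta where ta: "ta \<in> red n X" "a0 \<in> tri ta" using intri[OF a0(1)] by blast
  obtain tb where tb: "tb \<in> red n X" "b0 \<in> tri tb" using intri[OF b0(1)] by blast
  obtain tc where tc: "tc \<in> red n X" "c0 \<in> tri tc" using intri[OF c0(1)] by blast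
  have "fst ta = 0" using tri_bounds(1)[OF ta(2)] a0 by auto
  moreover have "snd tb = 0" using tri_bounds(2)[OF tb(2)] b0 by auto
  moreover have "fst tc + snd tc + 1 = n"
    using tri_bounds(3)[OF tc(2)] c0 tc(1) unfolding red_def board_def by auto
  ultimately show ?thesis using rb rconn ta tb tc unfolding ywin_def by blast
qed

lemma ywin_disj:
  assumes "ywin n X" "ywin n Z"
  shows "X \<inter> Z \<noteq> {}"
  using assms
proof (induction n arbitrary: X Z)
  case 0
  then show ?case by (auto simp: ywin_def board_def)
next
  case (Suc n)
  show ?case
  proof (cases "n = 0")
    case True
    have "board (Suc n) = {(0,0)}" using True by (auto simp: board_def)
    then show ?thesis using Suc.prems by (auto simp: ywin_def)
  next
    case False
    then have "n \<ge> 1" by simp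
    have "red n X \<inter> red n Z \<noteq> {}"
      using Suc.IH[OF red_win[OF Suc.prems(1) \<open>n \<ge> 1\<close>] red_win[OF Suc.prems(2) \<open>n \<ge> 1\<close>]] .
    then show ?thesis using red_disj by blast
  qed
qed



lemma hall:
  fixes A :: "'a set" and N :: "'a \<Rightarrow> 'b set"
  assumes "finite A" "\<forall>a\<in>A. finite (N a)"
    and "\<forall>X\<subseteq>A. card X \<le> card (\<Union>(N ` X))"
  shows "\<exists>f. inj_on f A \<and> (\<forall>a\<in>A. f a \<in> N a)"
  using assms
proof (induction "card A" arbitrary: A N rule: less_induct)
  case less
  note finA = less.prems(1) and finN = less.prems(2) and hc = less.prems(3)
  show ?case
  proof (cases "A = {}")
    case True then show ?thesis by auto
  next
    case Ane: False
    show ?thesis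
    proof (cases "\<exists>X. X \<subseteq> A \<and> X \<noteq> {} \<and> X \<noteq> A \<and> card (\<Union>(N ` X)) \<le> card X")
      case True
      then obtain X where X: "X \<subseteq> A" "X \<noteq> {}" "X \<noteq> A" "card (\<Union>(N ` X)) \<le> card X" by blast
      have Xfin: "finite X" using X(1) finA finite_subset by auto
      have cardX: "card X < card A" using X finA by (meson psubsetI psubset_card_mono)
      define M where "M = \<Union>(N ` X)"
      have Mfin: "finite M" unfolding M_def using Xfin finN X(1) by auto
      have eqX: "card M = card X" using X(4) hc X(1) unfolding M_def by (simp add: le_antisym)
      obtain g where g: "inj_on g X" "\<forall>a\<in>X. g a \<in> N a"
      proof -
        have "\<forall>a\<in>X. finite (N a)" using finN X(1) by auto
        moreover have "\<forall>Y\<subseteq>X. card Y \<le> card (\<Union>(N ` Y))" using hc X(1) by auto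
        ultimately show ?thesis using less.hyps[OF cardX Xfin] that by blast
      qed
      define N' where "N' = (\<lambda>a. N a - M)"
      have cardAX: "card (A - X) < card A" using X finA
        by (metis Diff_subset card_seteq linorder_not_le Diff_eq_empty_iff double_diff order_refl)
      have finAX: "finite (A - X)" using finA by auto
      have hall': "\<forall>Z\<subseteq>A - X. card Z \<le> card (\<Union>(N' ` Z))"
      proof (intro allI impI)
        fix Z assume Z: "Z \<subseteq> A - X"
        have Zfin: "finite Z" using Z finAX finite_subset by auto
        have un: "\<Union>(N ` (Z \<union> X)) = \<Union>(N' ` Z) \<union> M" by (auto simp: N'_def M_def)
        have disj: "\<Union>(N' ` Z) \<inter> M = {}" by (auto simp: N'_def)
        have f2: "finite (\<Union>(N' ` Z))" using Zfin finN Z unfolding N'_def by auto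
        have "Z \<union> X \<subseteq> A" using Z X(1) by auto
        then have "card (Z \<union> X) \<le> card (\<Union>(N ` (Z \<union> X)))" using hc by blast
        also have "\<dots> = card (\<Union>(N' ` Z)) + card M" using un disj f2 Mfin by (simp add: card_Un_disjoint)
        finally have "card (Z \<union> X) \<le> card (\<Union>(N' ` Z)) + card X" using eqX by simp
        moreover have "card (Z \<union> X) = card Z + card X"
          using Z Zfin Xfin by (subst card_Un_disjoint) auto
        ultimately show "card Z \<le> card (\<Union>(N' ` Z))" by simp
      qed
      obtain h where h: "inj_on h (A - X)" "\<forall>a\<in>A - X. h a \<in> N' a"
      proof -
        have "\<forall>a\<in>A - X. finite (N' a)" using finN unfolding N'_def by auto
        then show ?thesis using less.hyps[OF cardAX finAX] hall' that by blast
      qed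
      define f where "f = (\<lambda>a. if a \<in> X then g a else h a)"
      have fN: "\<forall>a\<in>A. f a \<in> N a" using g h unfolding f_def N'_def by auto
      have "inj_on f A"
      proof (rule inj_onI)
        fix a b assume ab: "a \<in> A" "b \<in> A" "f a = f b"
        show "a = b"
        proof (cases "a \<in> X"; cases "b \<in> X")
          assume "a \<in> X" "b \<in> X" then show ?thesis using ab g(1) unfolding f_def by (auto dest: inj_onD)
        next
          assume "a \<in> X" "b \<notin> X"
          then have "f a \<in> M" "f b \<notin> M" using g h ab unfolding f_def M_def N'_def by auto
          then show ?thesis using ab by auto
        next
          assume a1: "a \<notin> X" and b1: "b \<in> X"
          have "f b \<in> M" using g b1 unfolding f_def M_def by auto
          moreover have "f a \<notin> M" using h ab(1) a1 unfolding f_def N'_def by auto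
          ultimately show ?thesis using ab by auto
        next
          assume "a \<notin> X" "b \<notin> X" then show ?thesis using ab h(1) unfolding f_def by (auto dest: inj_onD)
        qed
      qed
      then show ?thesis using fN by blast
    next
      case False
      then have strict: "\<And>X. X \<subseteq> A \<Longrightarrow> X \<noteq> {} \<Longrightarrow> X \<noteq> A \<Longrightarrow> card X < card (\<Union>(N ` X))"
        by (meson not_le)
      obtain a where a: "a \<in> A" using Ane by auto
      have "{a} \<subseteq> A" using a by auto
      then have "card {a} \<le> card (\<Union>(N ` {a}))" using hc by blast
      then have "N a \<noteq> {}" by auto
      then obtain b where b: "b \<in> N a" by blast
      define A' where "A' = A - {a}"
      define N' where "N' = (\<lambda>x. N x - {b})"
      have cardA': "card A' < card A" unfolding A'_def using a finA by (metis card_Diff1_less)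
      have finA': "finite A'" unfolding A'_def using finA by auto
      have hall': "\<forall>Z\<subseteq>A'. card Z \<le> card (\<Union>(N' ` Z))"
      proof (intro allI impI)
        fix Z assume Z: "Z \<subseteq> A'"
        show "card Z \<le> card (\<Union>(N' ` Z))"
        proof (cases "Z = {}")
          case True then show ?thesis by simp
        next
          case False
          have ZA: "Z \<subseteq> A" "Z \<noteq> A" using Z a unfolding A'_def by auto
          have Zfin: "finite Z" using ZA finA finite_subset by auto
          have lt: "card Z < card (\<Union>(N ` Z))" using strict[OF ZA(1) False ZA(2)] .
          have eq: "\<Union>(N' ` Z) = \<Union>(N ` Z) - {b}" unfolding N'_def by auto
          have "card (\<Union>(N ` Z)) - 1 \<le> card (\<Union>(N ` Z) - {b})" using diff_card_le_card_Diff[of "{b}" "\<Union>(N ` Z)"] by simp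
          then show ?thesis using lt eq by simp
        qed
      qed
      obtain f' where f': "inj_on f' A'" "\<forall>x\<in>A'. f' x \<in> N' x"
      proof -
        have "\<forall>a\<in>A'. finite (N' a)" using finN unfolding N'_def A'_def by auto
        then show ?thesis using less.hyps[OF cardA' finA'] hall' that by blast
      qed
      define f where "f = f'(a := b)"
      have fN: "\<forall>x\<in>A. f x \<in> N x" using f' b unfolding f_def N'_def A'_def by auto
      have "inj_on f A"
      proof (rule inj_onI)
        fix x y assume xy: "x \<in> A" "y \<in> A" "f x = f y"
        show "x = y"
        proof (cases "x = a"; cases "y = a")
          assume "x \<noteq> a" "y \<noteq> a" then show ?thesis using xy f'(1) unfolding f_def A'_def by (auto dest: inj_onD)
        next
          assume "x = a" "y \<noteq> a"
          then have "f y \<noteq> b" using f' xy unfolding f_def N'_def A'_def by auto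
          then show ?thesis using xy \<open>x = a\<close> unfolding f_def by auto
        next
          assume "x \<noteq> a" "y = a"
          then have "f x \<noteq> b" using f' xy unfolding f_def N'_def A'_def by auto
          then show ?thesis using xy \<open>y = a\<close> unfolding f_def by auto
        qed simp
      qed
      then show ?thesis using fN by blast
    qed
  qed
qed



lemma min_def_conn:
  fixes nbs :: "'a \<Rightarrow> 'b set"
  assumes finS: "finite S" and finN: "\<forall>x\<in>S. finite (nbs x)"
    and def: "card (\<Union>(nbs ` S)) < card S"
    and minimal: "\<forall>S'. S' \<subset> S \<longrightarrow> card S' \<le> card (\<Union>(nbs ` S'))"
    and a: "a \<in> S" and b: "b \<in> S"
  shows "(\<lambda>x y. x \<in> S \<and> y \<in> S \<and> nbs x \<inter> nbs y \<noteq> {})\<^sup>*\<^sup>* a b"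
proof (rule ccontr)
  define R where "R = (\<lambda>x y. x \<in> S \<and> y \<in> S \<and> nbs x \<inter> nbs y \<noteq> {})"
  assume "\<not> ?thesis"
  then have nab: "\<not> R\<^sup>*\<^sup>* a b" unfolding R_def .
  define C where "C = {x \<in> S. R\<^sup>*\<^sup>* a x}"
  have aC: "a \<in> C" using a unfolding C_def by auto
  have bC: "b \<notin> C" using nab unfolding C_def by auto
  have CS: "C \<subset> S" using bC b unfolding C_def by auto
  have DS: "S - C \<subset> S" using aC a unfolding C_def by auto
  have disj: "\<Union>(nbs ` C) \<inter> \<Union>(nbs ` (S - C)) = {}"
  proof (rule ccontr)
    assume "\<Union>(nbs ` C) \<inter> \<Union>(nbs ` (S - C)) \<noteq> {}"
    then obtain u x y where xy: "x \<in> C" "y \<in> S - C" "u \<in> nbs x" "u \<in> nbs y" by blast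
    then have "R x y" unfolding R_def C_def by auto
    then have "R\<^sup>*\<^sup>* a y" using xy(1) unfolding C_def by auto
    then show False using xy(2) unfolding C_def by auto
  qed
  have un: "\<Union>(nbs ` S) = \<Union>(nbs ` C) \<union> \<Union>(nbs ` (S - C))" unfolding C_def by blast
  have fC: "finite C" using finS CS finite_subset by auto
  have f1: "finite (\<Union>(nbs ` C))" using finN fC CS by auto
  have f2: "finite (\<Union>(nbs ` (S - C)))" using finN finS by auto
  have "card (\<Union>(nbs ` S)) = card (\<Union>(nbs ` C)) + card (\<Union>(nbs ` (S - C)))"
    using un disj f1 f2 by (simp add: card_Un_disjoint)
  moreover have "card C \<le> card (\<Union>(nbs ` C))" using minimal CS by blast
  moreover have "card (S - C) \<le> card (\<Union>(nbs ` (S - C)))" using minimal DS by blast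
  moreover have "card S = card C + card (S - C)"
    using CS finS by (metis card_Diff_subset finite_subset le_add_diff_inverse psubset_imp_subset card_mono)
  ultimately show False using def by linarith
qed

definition phiU :: "monom \<Rightarrow> monom \<Rightarrow> nat \<times> nat" where
  "phiU m u = (2 * (cx u - cx m), 2 * (cz u - cz m))"
definition phiD :: "monom \<Rightarrow> monom \<Rightarrow> nat \<times> nat" where
  "phiD m w = (2 * (cx w - cx m), Suc (2 * (cz w - cz m)))"
definition cn :: "monom \<Rightarrow> monom \<Rightarrow> nat \<times> nat" where
  "cn m w = (Suc (2 * (cx w - cx m)), 2 * (cz w - cz m))"

lemma yrel_sym_rtr: "(yrel X)\<^sup>*\<^sup>* a b \<Longrightarrow> (yrel X)\<^sup>*\<^sup>* b a"
proof (induction rule: rtranclp_induct)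
  case base then show ?case by simp
next
  case (step y z)
  then have "yrel X z y" by (auto simp: yrel_def yadj_sym)
  then show ?case using step(3) by (rule converse_rtranclp_into_rtranclp)
qed

lemma adj_D_Uy: "yadj (phiD m w) (phiU m (ey w))"
  by (simp add: yadj_def phiD_def phiU_def)
lemma adj_D_Uz: "mdvd m w \<Longrightarrow> yadj (phiD m w) (phiU m (ez w))"
  by (simp add: yadj_def phiD_def phiU_def mdvd_c Suc_diff_le)
lemma adj_D_C: "yadj (phiD m w) (cn m w)"
  by (simp add: yadj_def phiD_def cn_def)
lemma adj_C_Ux: "mdvd m w \<Longrightarrow> yadj (cn m w) (phiU m (ex w))"
  by (simp add: yadj_def cn_def phiU_def mdvd_c Suc_diff_le)

lemma phi_path:
  assumes "mdvd m w" "adjacent u w" "phiD m w \<in> X" "phiU m u \<in> X" "u = ex w \<Longrightarrow> cn m w \<in> X"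
  shows "(yrel X)\<^sup>*\<^sup>* (phiD m w) (phiU m u)"
proof -
  have "u = ex w \<or> u = ey w \<or> u = ez w" using assms(2) by (simp add: adjacent_iff)
  then show ?thesis
  proof (elim disjE)
    assume u: "u = ex w"
    have "yrel X (phiD m w) (cn m w)" using assms(3,5) u adj_D_C by (auto simp: yrel_def)
    moreover have "yrel X (cn m w) (phiU m u)" using assms(1,4,5) u adj_C_Ux by (auto simp: yrel_def)
    ultimately show ?thesis by auto
  next
    assume u: "u = ey w"
    have "yrel X (phiD m w) (phiU m u)" using assms(3,4) u adj_D_Uy by (auto simp: yrel_def)
    then show ?thesis by auto
  next
    assume u: "u = ez w"
    have "yrel X (phiD m w) (phiU m u)" using assms(1,3,4) u adj_D_Uz by (auto simp: yrel_def)
    then show ?thesis by auto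
  qed
qed

lemma phiU_inj: "mdvd m u \<Longrightarrow> mdvd m u' \<Longrightarrow> mdeg u = mdeg u' \<Longrightarrow> phiU m u = phiU m u' \<Longrightarrow> u = u'"
  by (simp add: phiU_def mdvd_c mdeg_c monom_eq_iff) arith
lemma phiD_inj: "mdvd m u \<Longrightarrow> mdvd m u' \<Longrightarrow> mdeg u = mdeg u' \<Longrightarrow> phiD m u = phiD m u' \<Longrightarrow> u = u'"
  by (simp add: phiD_def mdvd_c mdeg_c monom_eq_iff) arith
lemma cn_inj: "mdvd m u \<Longrightarrow> mdvd m u' \<Longrightarrow> mdeg u = mdeg u' \<Longrightarrow> cn m u = cn m u' \<Longrightarrow> u = u'"
  by (simp add: cn_def mdvd_c mdeg_c monom_eq_iff) arith
lemma phi_UD: "phiU m u \<noteq> phiD m w" by (simp add: phiU_def phiD_def) arith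
lemma phi_UC: "phiU m u \<noteq> cn m w" by (simp add: phiU_def cn_def) arith
lemma phi_DC: "phiD m u \<noteq> cn m w" by (simp add: phiD_def cn_def) arith

lemma board_U: "mdvd m u \<Longrightarrow> mdeg u + 1 = d \<Longrightarrow> phiU m u \<in> board (2 * d - 2 * mdeg m - 1)"
  by (simp add: board_def phiU_def mdvd_c mdeg_c) arith
lemma board_D: "mdvd m w \<Longrightarrow> mdeg w + 2 = d \<Longrightarrow> phiD m w \<in> board (2 * d - 2 * mdeg m - 1)"
  by (simp add: board_def phiD_def mdvd_c mdeg_c) arith
lemma board_C: "mdvd m w \<Longrightarrow> mdeg w + 2 = d \<Longrightarrow> cn m w \<in> board (2 * d - 2 * mdeg m - 1)"
  by (simp add: board_def cn_def mdvd_c mdeg_c) arith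

lemma touchU_y: "mdvd m u \<Longrightarrow> mdeg u + 1 = d \<Longrightarrow> cy u = cy m \<Longrightarrow>
    fst (phiU m u) + snd (phiU m u) + 1 = 2 * d - 2 * mdeg m - 1"
  by (simp add: phiU_def mdvd_c mdeg_c) arith

lemma embed_contra:
  fixes S Y0 :: "monom set" and m :: monom and d :: nat
  assumes Sd: "\<forall>w\<in>S. mdeg w + 2 = d \<and> mdvd m w"
    and Yd: "\<forall>u\<in>Y0. mdeg u + 1 = d \<and> mdvd m u"
    and noadj: "\<forall>u\<in>Y0. \<forall>w\<in>S. \<not> adjacent u w"
    and Sconn: "\<forall>a\<in>S. \<forall>b\<in>S. (\<lambda>x y. x \<in> S \<and> y \<in> S \<and> (\<exists>u. adjacent u x \<and> adjacent u y))\<^sup>*\<^sup>* a b"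
    and Yconn: "\<forall>a\<in>Y0. \<forall>b\<in>Y0. (\<lambda>x y. x \<in> Y0 \<and> y \<in> Y0 \<and>
        (\<exists>w. mdeg w + 2 = d \<and> mdvd m w \<and> adjacent x w \<and> adjacent y w))\<^sup>*\<^sup>* a b"
    and wx: "wx \<in> S" "cx wx = cx m" and wy: "wy \<in> S" "cy wy = cy m" and wz: "wz \<in> S" "cz wz = cz m"
    and ux: "ux \<in> Y0" "cx ux = cx m" and uy: "uy \<in> Y0" "cy uy = cy m" and uz: "uz \<in> Y0" "cz uz = cz m"
  shows False
proof -
  define n where "n = 2 * d - 2 * mdeg m - 1"
  define US where "US = {u. \<exists>w\<in>S. adjacent u w}"
  define NY where "NY = {w. mdeg w + 2 = d \<and> mdvd m w \<and> (\<exists>u\<in>Y0. adjacent u w)}"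
  define X where "X = phiD m ` S \<union> phiU m ` US \<union> cn m ` S"
  define Z where "Z = phiU m ` Y0 \<union> phiD m ` NY \<union> cn m ` {w \<in> NY. ex w \<in> Y0}"
  have USd: "mdeg u + 1 = d \<and> mdvd m u" if uU: "u \<in> US" for u
  proof -
    obtain w where w: "w \<in> S" "adjacent u w" using uU unfolding US_def by auto
    have "mdvd m w" using Sd w(1) by auto
    then show ?thesis using adj_c[OF w(2)] Sd w(1) mdvd_trans[of m w u] by auto
  qed
  have NYd: "mdeg w + 2 = d \<and> mdvd m w" if "w \<in> NY" for w using that unfolding NY_def by auto
  have Xb: "X \<subseteq> board n"
    unfolding X_def n_def using Sd USd board_U board_D board_C by blast
  have Zb: "Z \<subseteq> board n"
    unfolding Z_def n_def using Yd NYd board_U board_D board_C by blast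
  have XZ: "X \<inter> Z = {}"
  proof (rule ccontr)
    assume "X \<inter> Z \<noteq> {}"
    then obtain a where aX: "a \<in> X" and aZ: "a \<in> Z" by blast
    show False
    proof -
      { fix w assume w: "w \<in> S" "a = phiD m w"
        then obtain w' where w': "w' \<in> NY" "a = phiD m w'"
          using aZ phi_UD phi_DC unfolding Z_def by (metis (no_types, lifting) UnE imageE)
        have h1: "mdeg w + 2 = d \<and> mdvd m w" using Sd w(1) by blast
        have h2: "mdeg w' + 2 = d \<and> mdvd m w'" using NYd w'(1) by blast
        have "w = w'" using phiD_inj[of m w w'] h1 h2 w(2) w'(2) by auto
        then have False using w w' noadj unfolding NY_def by auto }
      moreover
      { fix u assume u: "u \<in> US" "a = phiU m u"
        then obtain u' where u': "u' \<in> Y0" "a = phiU m u'"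
          using aZ phi_UD phi_UC unfolding Z_def by (metis (no_types, lifting) UnE imageE)
        have h1: "mdeg u + 1 = d \<and> mdvd m u" using USd u(1) by blast
        have h2: "mdeg u' + 1 = d \<and> mdvd m u'" using Yd u'(1) by blast
        have "u = u'" using phiU_inj[of m u u'] h1 h2 u(2) u'(2) by auto
        then have False using u u' noadj unfolding US_def by auto }
      moreover
      { fix w assume w: "w \<in> S" "a = cn m w"
        then obtain w' where w': "w' \<in> NY" "ex w' \<in> Y0" "a = cn m w'"
          using aZ phi_UC phi_DC unfolding Z_def by (metis (no_types, lifting) UnE imageE mem_Collect_eq)
        have h1: "mdeg w + 2 = d \<and> mdvd m w" using Sd w(1) by blast
        have h2: "mdeg w' + 2 = d \<and> mdvd m w'" using NYd w'(1) by blast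
        have "w = w'" using cn_inj[of m w w'] h1 h2 w(2) w'(3) by auto
        moreover have "adjacent (ex w) w" by (simp add: adjacent_iff)
        ultimately have False using w w' noadj by auto }
      ultimately show False using aX unfolding X_def by blast
    qed
  qed
  have pathX: "(yrel X)\<^sup>*\<^sup>* (phiD m w) (phiU m u)" if "w \<in> S" "adjacent u w" for w u
  proof (rule phi_path)
    show "mdvd m w" using that Sd by auto
    show "adjacent u w" by fact
    show "phiD m w \<in> X" using that unfolding X_def by auto
    show "phiU m u \<in> X" using that unfolding X_def US_def by auto
    show "cn m w \<in> X" if "u = ex w" using \<open>w \<in> S\<close> unfolding X_def by auto
  qed
  have Sto: "(yrel X)\<^sup>*\<^sup>* (phiD m wx) (phiD m w)" if "w \<in> S" for w
  proof -
    have "(\<lambda>x y. x \<in> S \<and> y \<in> S \<and> (\<exists>u. adjacent u x \<and> adjacent u y))\<^sup>*\<^sup>* wx w"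
      using Sconn wx(1) that by blast
    then show ?thesis
    proof (induction rule: rtranclp_induct)
      case base then show ?case by simp
    next
      case (step y z)
      then obtain u where u: "y \<in> S" "z \<in> S" "adjacent u y" "adjacent u z" by blast
      have "(yrel X)\<^sup>*\<^sup>* (phiD m y) (phiU m u)" using pathX u by blast
      moreover have "(yrel X)\<^sup>*\<^sup>* (phiU m u) (phiD m z)" using yrel_sym_rtr pathX u by blast
      ultimately show ?case using step(3) by (meson rtranclp_trans)
    qed
  qed
  have Xto: "(yrel X)\<^sup>*\<^sup>* (phiD m wx) a" if "a \<in> X" for a
  proof -
    { fix w assume "w \<in> S" "a = phiD m w" then have ?thesis using Sto by blast }
    moreover
    { fix u assume "u \<in> US" "a = phiU m u"
      then obtain w where w: "w \<in> S" "adjacent u w" unfolding US_def by auto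
      have ?thesis using Sto[OF w(1)] pathX[OF w] \<open>a = phiU m u\<close> by (meson rtranclp_trans) }
    moreover
    { fix w assume w: "w \<in> S" "a = cn m w"
      have "yrel X (phiD m w) (cn m w)" using w adj_D_C unfolding X_def yrel_def by auto
      then have ?thesis using Sto[OF w(1)] w(2) by auto }
    ultimately show ?thesis using that unfolding X_def by blast
  qed
  have Xconn: "yconn X" unfolding yconn_def
    using Xto yrel_sym_rtr by (meson rtranclp_trans)
  have pathZ: "(yrel Z)\<^sup>*\<^sup>* (phiD m w) (phiU m u)" if "w \<in> NY" "u \<in> Y0" "adjacent u w" for w u
  proof (rule phi_path)
    show "mdvd m w" using that NYd by auto
    show "adjacent u w" by fact
    show "phiD m w \<in> Z" using that unfolding Z_def by auto
    show "phiU m u \<in> Z" using that unfolding Z_def by auto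
    show "cn m w \<in> Z" if "u = ex w" using \<open>w \<in> NY\<close> \<open>u \<in> Y0\<close> that unfolding Z_def by auto
  qed
  have Yto: "(yrel Z)\<^sup>*\<^sup>* (phiU m ux) (phiU m u)" if "u \<in> Y0" for u
  proof -
    have "(\<lambda>x y. x \<in> Y0 \<and> y \<in> Y0 \<and>
        (\<exists>w. mdeg w + 2 = d \<and> mdvd m w \<and> adjacent x w \<and> adjacent y w))\<^sup>*\<^sup>* ux u"
      using Yconn ux(1) that by blast
    then show ?thesis
    proof (induction rule: rtranclp_induct)
      case base then show ?case by simp
    next
      case (step y z)
      then obtain w where w: "y \<in> Y0" "z \<in> Y0" "mdeg w + 2 = d" "mdvd m w" "adjacent y w" "adjacent z w"
        by blast
      have wN: "w \<in> NY" unfolding NY_def using w by auto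
      have "(yrel Z)\<^sup>*\<^sup>* (phiU m y) (phiD m w)" using yrel_sym_rtr pathZ wN w by blast
      moreover have "(yrel Z)\<^sup>*\<^sup>* (phiD m w) (phiU m z)" using pathZ wN w by blast
      ultimately show ?case using step(3) by (meson rtranclp_trans)
    qed
  qed
  have NYto: "(yrel Z)\<^sup>*\<^sup>* (phiU m ux) (phiD m w)" if wN: "w \<in> NY" for w
  proof -
    obtain u where u: "u \<in> Y0" "adjacent u w" using wN unfolding NY_def by auto
    show ?thesis using Yto[OF u(1)] yrel_sym_rtr[OF pathZ[OF wN u]] by (meson rtranclp_trans)
  qed
  have Zto: "(yrel Z)\<^sup>*\<^sup>* (phiU m ux) a" if "a \<in> Z" for a
  proof -
    { fix u assume "u \<in> Y0" "a = phiU m u" then have ?thesis using Yto by blast }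
    moreover
    { fix w assume "w \<in> NY" "a = phiD m w" then have ?thesis using NYto by blast }
    moreover
    { fix w assume w: "w \<in> NY" "ex w \<in> Y0" "a = cn m w"
      have "yrel Z (phiD m w) (cn m w)" using w adj_D_C unfolding Z_def yrel_def by auto
      then have ?thesis using NYto[OF w(1)] w(3) by auto }
    ultimately show ?thesis using that unfolding Z_def by blast
  qed
  have Zconn: "yconn Z" unfolding yconn_def
    using Zto yrel_sym_rtr by (meson rtranclp_trans)
  have wxd: "mdeg wx + 2 = d \<and> mdvd m wx" and wyd: "mdeg wy + 2 = d \<and> mdvd m wy"
    and wzd: "mdeg wz + 2 = d \<and> mdvd m wz" using Sd wx wy wz by auto
  have "ywin n X"
    unfolding ywin_def
  proof (intro conjI)
    show "X \<subseteq> board n" by (rule Xb)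
    show "yconn X" by (rule Xconn)
    show "\<exists>a\<in>X. fst a = 0"
    proof (intro bexI[of _ "phiD m wx"])
      show "fst (phiD m wx) = 0" using wx by (simp add: phiD_def)
      show "phiD m wx \<in> X" using wx unfolding X_def by blast
    qed
    show "\<exists>a\<in>X. snd a = 0"
    proof (intro bexI[of _ "phiU m (ey wz)"])
      show "snd (phiU m (ey wz)) = 0" using wz by (simp add: phiU_def)
      have "ey wz \<in> US" unfolding US_def using wz(1) by (auto simp: adjacent_iff)
      then show "phiU m (ey wz) \<in> X" unfolding X_def by auto
    qed
    show "\<exists>a\<in>X. fst a + snd a + 1 = n"
    proof (intro bexI[of _ "phiU m (ez wy)"])
      have "mdvd m (ez wy)" using wyd by (simp add: mdvd_c)
      moreover have "mdeg (ez wy) + 1 = d" using wyd by (simp add: mdeg_c)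
      moreover have "cy (ez wy) = cy m" using wy by simp
      ultimately show "fst (phiU m (ez wy)) + snd (phiU m (ez wy)) + 1 = n"
        unfolding n_def by (rule touchU_y)
      have "ez wy \<in> US" unfolding US_def using wy(1) by (auto simp: adjacent_iff)
      then show "phiU m (ez wy) \<in> X" unfolding X_def by auto
    qed
  qed
  moreover have "ywin n Z"
    unfolding ywin_def
  proof (intro conjI)
    show "Z \<subseteq> board n" by (rule Zb)
    show "yconn Z" by (rule Zconn)
    show "\<exists>a\<in>Z. fst a = 0"
    proof (intro bexI[of _ "phiU m ux"])
      show "fst (phiU m ux) = 0" using ux by (simp add: phiU_def)
      show "phiU m ux \<in> Z" using ux unfolding Z_def by blast
    qed
    show "\<exists>a\<in>Z. snd a = 0"
    proof (intro bexI[of _ "phiU m uz"])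
      show "snd (phiU m uz) = 0" using uz by (simp add: phiU_def)
      show "phiU m uz \<in> Z" using uz unfolding Z_def by blast
    qed
    show "\<exists>a\<in>Z. fst a + snd a + 1 = n"
    proof (intro bexI[of _ "phiU m uy"])
      show "fst (phiU m uy) + snd (phiU m uy) + 1 = n"
        unfolding n_def using Yd uy by (intro touchU_y) auto
      show "phiU m uy \<in> Z" using uy unfolding Z_def by auto
    qed
  qed
  ultimately show False using ywin_disj XZ by blast
qed

lemma pair_card:
  fixes Y0 :: "monom set" and g :: "monom \<Rightarrow> monom"
  assumes fin: "finite NN" and inj: "inj_on g Y0" and gin: "\<forall>u\<in>Y0. g u \<in> NN"
  shows "card Y0 \<le> card NN"
  using card_inj_on_le[OF inj _ fin] gin by blast

lemma ideal_down: "monomial_ideal I \<Longrightarrow> u \<notin> I \<Longrightarrow> mdvd w u \<Longrightarrow> w \<notin> I"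
  unfolding monomial_ideal_def by blast

lemma hall_cond:
  assumes ideal: "monomial_ideal I"
    and nh: "\<forall>m. mdeg m < d \<longrightarrow> card {w \<in> Qs d I. mdvd m w} \<le> card {u \<in> Ps d I. mdvd m u}"
    and S0: "S0 \<subseteq> Qs d I"
  shows "card S0 \<le> card (\<Union> ((\<lambda>w. {u \<in> Ps d I. adjacent u w}) ` S0))"
proof (rule ccontr)
  define Q where "Q = Qs d I"
  define P where "P = Ps d I"
  define nbU where "nbU w = {u \<in> P. adjacent u w}" for w
  define dfc where "dfc S \<longleftrightarrow> S \<subseteq> Q \<and> card (\<Union>(nbU ` S)) < card S" for S
  have finQ: "finite Q" unfolding Q_def by (rule finite_Qs)
  have finP: "finite P" unfolding P_def by (rule finite_Ps)
  assume "\<not> card S0 \<le> card (\<Union> ((\<lambda>w. {u \<in> Ps d I. adjacent u w}) ` S0))"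
  then have "dfc S0" using S0 unfolding dfc_def nbU_def P_def Q_def by auto
  define k where "k = (LEAST k. \<exists>S. dfc S \<and> card S = k)"
  have "\<exists>S. dfc S \<and> card S = k" unfolding k_def
    by (rule LeastI[where k = "card S0"]) (use \<open>dfc S0\<close> in auto)
  then obtain S where S: "dfc S" "card S = k" by blast
  have SQ: "S \<subseteq> Q" and Sdef: "card (\<Union>(nbU ` S)) < card S" using S unfolding dfc_def by auto
  have finS: "finite S" using SQ finQ finite_subset by auto
  have finNU: "\<forall>x\<in>S. finite (nbU x)" unfolding nbU_def using finP by auto
  have minS: "\<forall>S'. S' \<subset> S \<longrightarrow> card S' \<le> card (\<Union>(nbU ` S'))"
  proof (intro allI impI)
    fix S' assume S': "S' \<subset> S"
    have "card S' < card S" using psubset_card_mono[OF finS S'] .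
    show "card S' \<le> card (\<Union>(nbU ` S'))"
    proof (rule ccontr)
      assume "\<not> ?thesis"
      then have "dfc S'" using S' SQ unfolding dfc_def by auto
      then have "k \<le> card S'" unfolding k_def by (intro Least_le) blast
      then show False using \<open>card S' < card S\<close> S(2) by simp
    qed
  qed
  have Sne: "S \<noteq> {}" using Sdef by auto
  have connS0: "\<forall>a\<in>S. \<forall>b\<in>S. (\<lambda>x y. x \<in> S \<and> y \<in> S \<and> nbU x \<inter> nbU y \<noteq> {})\<^sup>*\<^sup>* a b"
    using min_def_conn[OF finS finNU Sdef minS] by blast
  have RS: "(\<lambda>x y. x \<in> S \<and> y \<in> S \<and> nbU x \<inter> nbU y \<noteq> {}) \<le> (\<lambda>x y. x \<in> S \<and> y \<in> S \<and> (\<exists>u. adjacent u x \<and> adjacent u y))"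
  proof (intro predicate2I)
    fix x y assume xy: "x \<in> S \<and> y \<in> S \<and> nbU x \<inter> nbU y \<noteq> {}"
    then obtain u where u: "u \<in> nbU x" "u \<in> nbU y" by blast
    then have "adjacent u x \<and> adjacent u y" unfolding nbU_def by blast
    then show "x \<in> S \<and> y \<in> S \<and> (\<exists>u. adjacent u x \<and> adjacent u y)" using xy by blast
  qed
  have connS: "\<forall>a\<in>S. \<forall>b\<in>S. (\<lambda>x y. x \<in> S \<and> y \<in> S \<and> (\<exists>u. adjacent u x \<and> adjacent u y))\<^sup>*\<^sup>* a b"
    using connS0 rtranclp_mono[OF RS] by blast
  define m where "m = (Min (cx ` S), Min (cy ` S), Min (cz ` S))"
  have mS: "\<forall>w\<in>S. mdvd m w" unfolding m_def using finS by (auto simp: mdvd_c)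
  have "Min (cx ` S) \<in> cx ` S" using finS Sne by (intro Min_in) auto
  then obtain wx where wx: "wx \<in> S" "cx wx = cx m" unfolding m_def by auto
  have "Min (cy ` S) \<in> cy ` S" using finS Sne by (intro Min_in) auto
  then obtain wy where wy: "wy \<in> S" "cy wy = cy m" unfolding m_def by auto
  have "Min (cz ` S) \<in> cz ` S" using finS Sne by (intro Min_in) auto
  then obtain wz where wz: "wz \<in> S" "cz wz = cz m" unfolding m_def by auto
  have Sd: "\<forall>w\<in>S. mdeg w + 2 = d \<and> mdvd m w" using SQ mS unfolding Q_def Qs_def by auto
  have degm: "mdeg m + 2 \<le> d" using Sd wx(1) by (auto simp: mdvd_c mdeg_c)
  define Qm where "Qm = {w \<in> Q. mdvd m w}"
  define Pm where "Pm = {u \<in> P. mdvd m u}"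
  have finQm: "finite Qm" and finPm: "finite Pm" using finQ finP unfolding Qm_def Pm_def by auto
  have "mdeg m < d" using degm by simp
  then have heavy: "card Qm \<le> card Pm" using nh unfolding Qm_def Pm_def Q_def P_def by blast
  define NS where "NS = \<Union>(nbU ` S)"
  have NSPm: "NS \<subseteq> Pm"
  proof
    fix u assume "u \<in> NS"
    then obtain w where w: "w \<in> S" "u \<in> P" "adjacent u w" unfolding NS_def nbU_def by auto
    have "mdvd m u" using mS w(1) adj_c[OF w(3)] mdvd_trans by blast
    then show "u \<in> Pm" using w unfolding Pm_def by auto
  qed
  have SQm: "S \<subseteq> Qm" using SQ mS unfolding Qm_def by auto
  define nbD where "nbD u = {w \<in> Qm. adjacent u w}" for u
  define Y where "Y = Pm - NS"
  have finY: "finite Y" using finPm unfolding Y_def by auto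
  have NYsub: "\<Union>(nbD ` Y) \<subseteq> Qm - S"
  proof
    fix w assume "w \<in> \<Union>(nbD ` Y)"
    then obtain u where u: "u \<in> Y" "w \<in> Qm" "adjacent u w" unfolding nbD_def by auto
    have "w \<notin> S"
    proof
      assume "w \<in> S"
      then have "u \<in> NS" using u unfolding NS_def nbU_def Y_def Pm_def by auto
      then show False using u(1) unfolding Y_def by auto
    qed
    then show "w \<in> Qm - S" using u by auto
  qed
  have cNY: "card (\<Union>(nbD ` Y)) \<le> card Qm - card S"
  proof -
    have "card (\<Union>(nbD ` Y)) \<le> card (Qm - S)" using NYsub finQm by (meson card_mono finite_Diff)
    also have "\<dots> = card Qm - card S" using SQm finS by (simp add: card_Diff_subset)
    finally show ?thesis .
  qed
  have cY: "card Y = card Pm - card NS" unfolding Y_def using NSPm finPm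
    by (meson card_Diff_subset finite_subset)
  have cS: "card S \<le> card Qm" using card_mono[OF finQm SQm] .
  have cNS: "card NS < card S" using Sdef unfolding NS_def .
  have dY: "card (\<Union>(nbD ` Y)) < card Y" using cNY cY cS cNS heavy by linarith
  define dfy where "dfy T \<longleftrightarrow> T \<subseteq> Y \<and> card (\<Union>(nbD ` T)) < card T" for T
  define k2 where "k2 = (LEAST k. \<exists>T. dfy T \<and> card T = k)"
  have "\<exists>T. dfy T \<and> card T = k2" unfolding k2_def
    by (rule LeastI[where k = "card Y"]) (use dY in \<open>auto simp: dfy_def\<close>)
  then obtain Y0 where Y0: "dfy Y0" "card Y0 = k2" by blast
  have Y0Y: "Y0 \<subseteq> Y" and Y0def: "card (\<Union>(nbD ` Y0)) < card Y0" using Y0 unfolding dfy_def by auto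
  have finY0: "finite Y0" using Y0Y finY finite_subset by auto
  have finND: "\<forall>x\<in>Y0. finite (nbD x)" unfolding nbD_def using finQm by auto
  have minY: "\<forall>T. T \<subset> Y0 \<longrightarrow> card T \<le> card (\<Union>(nbD ` T))"
  proof (intro allI impI)
    fix T assume T: "T \<subset> Y0"
    have "card T < card Y0" using psubset_card_mono[OF finY0 T] .
    show "card T \<le> card (\<Union>(nbD ` T))"
    proof (rule ccontr)
      assume "\<not> ?thesis"
      then have "dfy T" using T Y0Y unfolding dfy_def by auto
      then have "k2 \<le> card T" unfolding k2_def by (intro Least_le) blast
      then show False using \<open>card T < card Y0\<close> Y0(2) by simp
    qed
  qed
  have connY0: "\<forall>a\<in>Y0. \<forall>b\<in>Y0. (\<lambda>x y. x \<in> Y0 \<and> y \<in> Y0 \<and> nbD x \<inter> nbD y \<noteq> {})\<^sup>*\<^sup>* a b"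
    using min_def_conn[OF finY0 finND Y0def minY] by blast
  have RR: "(\<lambda>x y. x \<in> Y0 \<and> y \<in> Y0 \<and> nbD x \<inter> nbD y \<noteq> {}) \<le> (\<lambda>x y. x \<in> Y0 \<and> y \<in> Y0 \<and>
        (\<exists>w. mdeg w + 2 = d \<and> mdvd m w \<and> adjacent x w \<and> adjacent y w))"
  proof (intro predicate2I)
    fix x y assume xy: "x \<in> Y0 \<and> y \<in> Y0 \<and> nbD x \<inter> nbD y \<noteq> {}"
    then obtain w where w: "w \<in> nbD x" "w \<in> nbD y" by blast
    have "mdeg w + 2 = d \<and> mdvd m w \<and> adjacent x w \<and> adjacent y w"
      using w unfolding nbD_def Qm_def Q_def Qs_def by blast
    then show "x \<in> Y0 \<and> y \<in> Y0 \<and> (\<exists>w. mdeg w + 2 = d \<and> mdvd m w \<and> adjacent x w \<and> adjacent y w)"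
      using xy by blast
  qed
  have connY: "\<forall>a\<in>Y0. \<forall>b\<in>Y0. (\<lambda>x y. x \<in> Y0 \<and> y \<in> Y0 \<and>
        (\<exists>w. mdeg w + 2 = d \<and> mdvd m w \<and> adjacent x w \<and> adjacent y w))\<^sup>*\<^sup>* a b"
    using connY0 rtranclp_mono[OF RR] by blast
  have Y0P: "\<forall>u\<in>Y0. u \<in> P \<and> mdvd m u" using Y0Y unfolding Y_def Pm_def by auto
  have Yd: "\<forall>u\<in>Y0. mdeg u + 1 = d \<and> mdvd m u" using Y0P unfolding P_def Ps_def by auto
  have noadj: "\<forall>u\<in>Y0. \<forall>w\<in>S. \<not> adjacent u w"
  proof (intro ballI notI)
    fix u w assume u: "u \<in> Y0" and w: "w \<in> S" and a: "adjacent u w"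
    have "u \<in> NS" using u w a Y0P unfolding NS_def nbU_def by auto
    then show False using u Y0Y unfolding Y_def by auto
  qed
  have NDfin: "finite (\<Union>(nbD ` Y0))" using finY0 finND by auto
  have lowin: "v \<in> \<Union>(nbD ` Y0)" if u: "u \<in> Y0" and v: "mdeg v + 2 = d" "mdvd v u" "mdvd m v" "adjacent u v" for u v
  proof -
    have "u \<notin> I" using Y0P u unfolding P_def Ps_def by auto
    then have "v \<notin> I" using ideal_down[OF ideal _ v(2)] by blast
    then have "v \<in> Qm" using v unfolding Qm_def Q_def Qs_def by auto
    then show ?thesis using u v(4) unfolding nbD_def by auto
  qed
  have "\<exists>ux\<in>Y0. cx ux = cx m"
  proof (rule ccontr)
    assume no: "\<not> ?thesis"
    define g where "g u = (cx u - 1, cy u, cz u)" for u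
    have gx: "\<forall>u\<in>Y0. cx m < cx u"
    proof
      fix u assume u: "u \<in> Y0"
      then have "cx u \<noteq> cx m" using no by blast
      moreover have "cx m \<le> cx u" using Yd u by (simp add: mdvd_c)
      ultimately show "cx m < cx u" by simp
    qed
    have "inj_on g Y0"
    proof (rule inj_onI)
      fix u v assume u: "u \<in> Y0" and v: "v \<in> Y0" and eq: "g u = g v"
      have "cx m < cx u" "cx m < cx v" using gx u v by auto
      then show "u = v" using eq unfolding g_def monom_eq_iff by auto
    qed
    moreover have "\<forall>u\<in>Y0. g u \<in> \<Union>(nbD ` Y0)"
    proof
      fix u assume u: "u \<in> Y0"
      have ug: "u = ex (g u)" using gx u by (auto simp: g_def ex_def monom_eq_iff)
      show "g u \<in> \<Union>(nbD ` Y0)"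
      proof (rule lowin[OF u])
        show "mdeg (g u) + 2 = d" using Yd u gx by (auto simp: g_def mdeg_c)
        show "mdvd (g u) u" using gx u by (auto simp: g_def mdvd_c)
        show "mdvd m (g u)" using gx u Yd by (auto simp: g_def mdvd_c)
        show "adjacent u (g u)" using ug by (simp add: adjacent_iff)
      qed
    qed
    ultimately have "card Y0 \<le> card (\<Union>(nbD ` Y0))" using pair_card NDfin by blast
    then show False using Y0def by simp
  qed
  then obtain ux where ux: "ux \<in> Y0" "cx ux = cx m" by blast
  have "\<exists>uy\<in>Y0. cy uy = cy m"
  proof (rule ccontr)
    assume no: "\<not> ?thesis"
    define g where "g u = (cx u, cy u - 1, cz u)" for u
    have gx: "\<forall>u\<in>Y0. cy m < cy u"
    proof
      fix u assume u: "u \<in> Y0"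
      then have "cy u \<noteq> cy m" using no by blast
      moreover have "cy m \<le> cy u" using Yd u by (simp add: mdvd_c)
      ultimately show "cy m < cy u" by simp
    qed
    have "inj_on g Y0"
    proof (rule inj_onI)
      fix u v assume u: "u \<in> Y0" and v: "v \<in> Y0" and eq: "g u = g v"
      have "cy m < cy u" "cy m < cy v" using gx u v by auto
      then show "u = v" using eq unfolding g_def monom_eq_iff by auto
    qed
    moreover have "\<forall>u\<in>Y0. g u \<in> \<Union>(nbD ` Y0)"
    proof
      fix u assume u: "u \<in> Y0"
      have ug: "u = ey (g u)" using gx u by (auto simp: g_def ey_def monom_eq_iff)
      show "g u \<in> \<Union>(nbD ` Y0)"
      proof (rule lowin[OF u])
        show "mdeg (g u) + 2 = d" using Yd u gx by (auto simp: g_def mdeg_c)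
        show "mdvd (g u) u" using gx u by (auto simp: g_def mdvd_c)
        show "mdvd m (g u)" using gx u Yd by (auto simp: g_def mdvd_c)
        show "adjacent u (g u)" using ug by (simp add: adjacent_iff)
      qed
    qed
    ultimately have "card Y0 \<le> card (\<Union>(nbD ` Y0))" using pair_card NDfin by blast
    then show False using Y0def by simp
  qed
  then obtain uy where uy: "uy \<in> Y0" "cy uy = cy m" by blast
  have "\<exists>uz\<in>Y0. cz uz = cz m"
  proof (rule ccontr)
    assume no: "\<not> ?thesis"
    define g where "g u = (cx u, cy u, cz u - 1)" for u
    have gx: "\<forall>u\<in>Y0. cz m < cz u"
    proof
      fix u assume u: "u \<in> Y0"
      then have "cz u \<noteq> cz m" using no by blast
      moreover have "cz m \<le> cz u" using Yd u by (simp add: mdvd_c)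
      ultimately show "cz m < cz u" by simp
    qed
    have "inj_on g Y0"
    proof (rule inj_onI)
      fix u v assume u: "u \<in> Y0" and v: "v \<in> Y0" and eq: "g u = g v"
      have "cz m < cz u" "cz m < cz v" using gx u v by auto
      then show "u = v" using eq unfolding g_def monom_eq_iff by auto
    qed
    moreover have "\<forall>u\<in>Y0. g u \<in> \<Union>(nbD ` Y0)"
    proof
      fix u assume u: "u \<in> Y0"
      have ug: "u = ez (g u)" using gx u by (auto simp: g_def ez_def monom_eq_iff)
      show "g u \<in> \<Union>(nbD ` Y0)"
      proof (rule lowin[OF u])
        show "mdeg (g u) + 2 = d" using Yd u gx by (auto simp: g_def mdeg_c)
        show "mdvd (g u) u" using gx u by (auto simp: g_def mdvd_c)
        show "mdvd m (g u)" using gx u Yd by (auto simp: g_def mdvd_c)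
        show "adjacent u (g u)" using ug by (simp add: adjacent_iff)
      qed
    qed
    ultimately have "card Y0 \<le> card (\<Union>(nbD ` Y0))" using pair_card NDfin by blast
    then show False using Y0def by simp
  qed
  then obtain uz where uz: "uz \<in> Y0" "cz uz = cz m" by blast
  show False
    using embed_contra[OF Sd Yd noadj connS connY wx wy wz ux uy uz] .
qed



lemma Up_in_Td: "Up u \<in> Td d I \<longleftrightarrow> u \<in> Ps d I"
  by (cases u) (auto simp: Td_def triangle_def Ps_def tri_label_def)
lemma Down_in_Td: "Down w \<in> Td d I \<longleftrightarrow> w \<in> Qs d I"
  by (cases w) (auto simp: Td_def triangle_def Qs_def tri_label_def)
lemma Td_eq: "Td d I = Up ` Ps d I \<union> Down ` Qs d I"
proof -
  have "t \<in> Td d I \<longleftrightarrow> t \<in> Up ` Ps d I \<union> Down ` Qs d I" for t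
    by (cases t) (auto simp: Up_in_Td Down_in_Td)
  then show ?thesis by blast
qed

lemma tile_noheavy:
  assumes til: "lozenge_tiling Pt (Td d I)"
  shows "card {w \<in> Qs d I. mdvd m w} \<le> card {u \<in> Ps d I. mdvd m u}"
proof -
  have cover: "\<Union>Pt = Td d I" and lz: "\<forall>L\<in>Pt. is_lozenge L \<and> L \<subseteq> Td d I"
    and dj: "\<forall>L\<in>Pt. \<forall>L'\<in>Pt. L \<noteq> L' \<longrightarrow> L \<inter> L' = {}"
    using til by (auto simp: lozenge_tiling_def)
  have ex: "\<exists>u. \<exists>L\<in>Pt. L = {Up u, Down w} \<and> adjacent u w" if w: "w \<in> Qs d I" for w
  proof -
    have "Down w \<in> Td d I" using w by (simp add: Down_in_Td)
    then obtain L where L: "L \<in> Pt" "Down w \<in> L" using cover by blast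
    then obtain u w' where uw: "L = {Up u, Down w'}" "adjacent u w'"
      using lz by (auto simp: is_lozenge_def)
    then have "w' = w" using L by auto
    then show ?thesis using L uw by blast
  qed
  define pt where "pt w = (SOME u. \<exists>L\<in>Pt. L = {Up u, Down w} \<and> adjacent u w)" for w
  have ptp: "\<exists>L\<in>Pt. L = {Up (pt w), Down w} \<and> adjacent (pt w) w" if "w \<in> Qs d I" for w
    unfolding pt_def using someI_ex[OF ex[OF that]] .
  have inj: "inj_on pt (Qs d I)"
  proof (rule inj_onI)
    fix w w' assume w: "w \<in> Qs d I" and w': "w' \<in> Qs d I" and eq: "pt w = pt w'"
    obtain L where L: "L \<in> Pt" "L = {Up (pt w), Down w}" using ptp[OF w] by blast
    obtain L' where L': "L' \<in> Pt" "L' = {Up (pt w'), Down w'}" using ptp[OF w'] by blast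
    have upin: "Up (pt w) \<in> L \<inter> L'" using L L' eq by auto
    have "L = L'"
    proof (rule ccontr)
      assume "L \<noteq> L'"
      then have "L \<inter> L' = {}" using dj L(1) L'(1) by blast
      then show False using upin by auto
    qed
    then show "w = w'" using L L' eq by (auto simp: doubleton_eq_iff)
  qed
  have img: "pt ` {w \<in> Qs d I. mdvd m w} \<subseteq> {u \<in> Ps d I. mdvd m u}"
  proof
    fix u assume "u \<in> pt ` {w \<in> Qs d I. mdvd m w}"
    then obtain w where w: "w \<in> Qs d I" "mdvd m w" "u = pt w" by auto
    obtain L where L: "L \<in> Pt" "L = {Up u, Down w}" "adjacent u w" using ptp[OF w(1)] w(3) by blast
    have "Up u \<in> Td d I" using lz L by auto
    then have "u \<in> Ps d I" by (simp add: Up_in_Td)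
    moreover have "mdvd m u" using w(2) adj_c[OF L(3)] mdvd_trans by blast
    ultimately show "u \<in> {u \<in> Ps d I. mdvd m u}" by simp
  qed
  have "inj_on pt {w \<in> Qs d I. mdvd m w}" using inj by (rule inj_on_subset) auto
  moreover have "finite {u \<in> Ps d I. mdvd m u}" using finite_Ps by auto
  ultimately show ?thesis using img card_inj_on_le by blast
qed

lemma tile_exists:
  assumes ideal: "monomial_ideal I"
    and nh: "\<forall>m. mdeg m < d \<longrightarrow> card {w \<in> Qs d I. mdvd m w} \<le> card {u \<in> Ps d I. mdvd m u}"
    and bal: "card (Ps d I) = card (Qs d I)"
  shows "tileable (Td d I)"
proof -
  define N where "N w = {u \<in> Ps d I. adjacent u w}" for w
  have "\<exists>f. inj_on f (Qs d I) \<and> (\<forall>w\<in>Qs d I. f w \<in> N w)"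
  proof (rule hall)
    show "finite (Qs d I)" by (rule finite_Qs)
    show "\<forall>a\<in>Qs d I. finite (N a)" unfolding N_def using finite_Ps by auto
    show "\<forall>X\<subseteq>Qs d I. card X \<le> card (\<Union> (N ` X))"
      unfolding N_def using hall_cond[OF ideal nh] by blast
  qed
  then obtain f where f: "inj_on f (Qs d I)" "\<forall>w\<in>Qs d I. f w \<in> Ps d I \<and> adjacent (f w) w"
    unfolding N_def by auto
  have fimg: "f ` Qs d I = Ps d I"
  proof (rule card_seteq)
    show "finite (Ps d I)" by (rule finite_Ps)
    show "f ` Qs d I \<subseteq> Ps d I" using f by auto
    show "card (Ps d I) \<le> card (f ` Qs d I)" using bal card_image[OF f(1)] by simp
  qed
  define Pt where "Pt = (\<lambda>w. {Up (f w), Down w}) ` Qs d I"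
  have "lozenge_tiling Pt (Td d I)"
    unfolding lozenge_tiling_def
  proof (intro conjI ballI impI)
    fix L assume "L \<in> Pt"
    then obtain w where w: "w \<in> Qs d I" "L = {Up (f w), Down w}" unfolding Pt_def by auto
    show "is_lozenge L" unfolding is_lozenge_def using w f by blast
    show "L \<subseteq> Td d I" using w f by (auto simp: Up_in_Td Down_in_Td)
  next
    fix L L' assume L: "L \<in> Pt" and L': "L' \<in> Pt" and ne: "L \<noteq> L'"
    obtain w where w: "w \<in> Qs d I" "L = {Up (f w), Down w}" using L unfolding Pt_def by auto
    obtain w' where w': "w' \<in> Qs d I" "L' = {Up (f w'), Down w'}" using L' unfolding Pt_def by auto
    have "w \<noteq> w'" using ne w w' by auto
    then have "f w \<noteq> f w'" using f(1) w w' by (auto dest: inj_onD)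
    then show "L \<inter> L' = {}" using w w' \<open>w \<noteq> w'\<close> by auto
  next
    show "\<Union>Pt = Td d I"
    proof
      show "\<Union>Pt \<subseteq> Td d I" unfolding Pt_def using f by (auto simp: Up_in_Td Down_in_Td)
      show "Td d I \<subseteq> \<Union>Pt"
      proof
        fix t assume "t \<in> Td d I"
        then have "t \<in> Up ` Ps d I \<union> Down ` Qs d I" by (simp add: Td_eq)
        then show "t \<in> \<Union>Pt"
        proof
          assume "t \<in> Up ` Ps d I"
          then obtain u where u: "u \<in> Ps d I" "t = Up u" by auto
          then obtain w where "w \<in> Qs d I" "u = f w" using fimg by (metis imageE)
          then show ?thesis using u unfolding Pt_def by blast
        next
          assume "t \<in> Down ` Qs d I"
          then show ?thesis unfolding Pt_def by blast
        qed
      qed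
    qed
  qed
  then show ?thesis unfolding tileable_def by blast
qed

theorem theorem2p2:
  fixes I :: "monom set" and d :: nat
  assumes "d \<ge> 1"
    and "monomial_ideal I"
    and "balanced (Td d I)"
  shows "tileable (Td d I) \<longleftrightarrow>
           (\<forall>m. mdeg m < d \<longrightarrow> \<not> down_heavy (monomial_subregion (Td d I) m))"
proof -
  have dh: "down_heavy (monomial_subregion (Td d I) m) \<longleftrightarrow>
      card {u \<in> Ps d I. mdvd m u} < card {w \<in> Qs d I. mdvd m w}" for m
    by (simp add: down_heavy_def downs_sub ups_sub card_Up card_Down)
  have bal: "card (Ps d I) = card (Qs d I)"
    using assms(3) by (simp add: balanced_def ups_Td downs_Td card_Up card_Down)
  show ?thesis
  proof
    assume "tileable (Td d I)"
    then obtain Pt where "lozenge_tiling Pt (Td d I)" by (auto simp: tileable_def)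
    then show "\<forall>m. mdeg m < d \<longrightarrow> \<not> down_heavy (monomial_subregion (Td d I) m)"
      using tile_noheavy dh by (simp add: not_less)
  next
    assume "\<forall>m. mdeg m < d \<longrightarrow> \<not> down_heavy (monomial_subregion (Td d I) m)"
    then have "\<forall>m. mdeg m < d \<longrightarrow> card {w \<in> Qs d I. mdvd m w} \<le> card {u \<in> Ps d I. mdvd m u}"
      using dh by (simp add: not_less)
    then show "tileable (Td d I)" using tile_exists[OF assms(2) _ bal] by blast
  qed
qed


end
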